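(* In the setting below, with $Q=L/\mu$ and $K\ge 1$, let $a\ge3$ be an integer, let \[ \overline{\eta}_a=\Big(\frac{1}{144(aK+1)KQ^2}\Big)^{\frac{1}{a-2}}, \] and suppose the step size satisfies $0<\eta\le\frac{1}{3L(K+1)}\overline{\eta}_a$. Then for every integer $k\ge aK+1$, \[ F_k\le\Big(1-\eta\frac{\mu}{18}\Big)^{\frac{k+1}{aK+1}-1}\Big(\max_{0\le j\le aK}F_j\Big). \]
   Context: Let $m,n\ge 1$ be integers and $\|\cdot\|$ the Euclidean norm on $\mathbb{R}^n$. For $i=1,\dots,m$, let $f_i:\mathbb{R}^n\to\mathbb{R}$ be continuously differentiable with $\|\nabla f_i(x)-\nabla f_i(y)\|\le L_i\|x-y\|$ for all $x,y$, where $L_i\ge 0$ (the $f_i$ are not assumed convex). Let $f=\frac1m\sum_{i=1}^m f_i$ and $L=\frac1m\sum_{i=1}^m L_i$. Assume $f$ is $\mu$-strongly convex for some $\mu>0$ (i.e. $x\mapsto f(x)-\frac{\mu}{2}\|x\|^2$ is convex). Let $r:\mathbb{R}^n\to(-\infty,\infty]$ be proper, closed and convex, let $F=f+r$, and let $x^*$ be the unique minimizer of $F$. For $\eta>0$ define $\mathrm{prox}_r^\eta(y)=\arg\min_{x\in\mathbb{R}^n}\{\frac12\|x-y\|^2+\eta r(x)\}$. PIAG method: fix an integer $K$, a step size $\eta>0$ and $x_0\in\mathbb{R}^n$; for each $k\ge0$ and each $i$ let $\tau_{i,k}$ be any (deterministically chosen) integer with $\max(k-K,0)\le\tau_{i,k}\le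 k$; set $g_k=\frac1m\sum_{i=1}^m\nabla f_i(x_{\tau_{i,k}})$ and $x_{k+1}=\mathrm{prox}_r^\eta(x_k-\eta g_k)$. Define $F_k=F(x_k)-F(x^* )$. *)

theory Defs
  imports "HOL-Analysis.Analysis" "HOL-Library.Extended_Real"
begin

definition epigraph_ext :: "('a \<Rightarrow> ereal) \<Rightarrow> ('a \<times> real) set" where
  "epigraph_ext r = {(x, t). r x \<le> ereal t}"

definition proper_closed_convex :: "('a::euclidean_space \<Rightarrow> ereal) \<Rightarrow> bool" where
  "proper_closed_convex r \<longleftrightarrow>
     (\<forall>x. r x \<noteq> -\<infinity>) \<and> (\<exists>x. r x \<noteq> \<infinity>) \<and>
     closed (epigraph_ext r) \<and> convex (epigraph_ext r)"

definition prox :: "('a::euclidean_space \<Rightarrow> ereal) \<Rightarrow> real \<Rightarrow> 'a \<Rightarrow> 'a" where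
  "prox r \<eta> y = (THE x. \<forall>z. ereal ((1/2) * (norm (x - y))\<^sup>2) + ereal \<eta> * r x
                              \<le> ereal ((1/2) * (norm (z - y))\<^sup>2) + ereal \<eta> * r z)"

end

theory Submission imports Defs begin

lemma descent_upper:
  fixes \<phi> :: "'a::euclidean_space \<Rightarrow> real" and G :: "'a \<Rightarrow> 'a"
  assumes der: "\<And>y. (\<phi> has_derivative (\<lambda>h. G y \<bullet> h)) (at y)"
    and lip: "\<And>y z. norm (G y - G z) \<le> Lc * norm (y - z)"
    and Lc: "Lc \<ge> 0"
  shows "\<phi> z \<le> \<phi> y + G y \<bullet> (z - y) + Lc / 2 * (norm (z - y))\<^sup>2"
proof -
  define d where "d = z - y"
  define p where "p = (\<lambda>t. \<phi> (y + t *\<^sub>R d) - t * (G y \<bullet> d) - Lc / 2 * t\<^sup>2 * (norm d)\<^sup>2)"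
  have "p 1 \<le> p 0"
  proof (rule DERIV_nonpos_imp_nonincreasing[of 0 1])
    fix t :: real assume t: "0 \<le> t" "t \<le> 1"
    have d1: "((\<lambda>t. \<phi> (y + t *\<^sub>R d)) has_derivative (\<lambda>s. G (y + t *\<^sub>R d) \<bullet> (s *\<^sub>R d))) (at t)"
      by (rule has_derivative_compose[OF _ der]) (auto intro!: derivative_eq_intros)
    have d2: "((\<lambda>t. \<phi> (y + t *\<^sub>R d)) has_real_derivative (G (y + t *\<^sub>R d) \<bullet> d)) (at t)"
    proof -
      have e: "(\<lambda>s. G (y + t *\<^sub>R d) \<bullet> (s *\<^sub>R d)) = (*) (G (y + t *\<^sub>R d) \<bullet> d)"
        by (rule ext) simp
      show ?thesis unfolding has_field_derivative_def using d1 e by simp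
    qed
    have "(p has_real_derivative (G (y + t *\<^sub>R d) \<bullet> d - G y \<bullet> d - Lc / 2 * (2 * t) * (norm d)\<^sup>2)) (at t)"
      unfolding p_def by (rule derivative_eq_intros d2 | simp)+
    moreover have "G (y + t *\<^sub>R d) \<bullet> d - G y \<bullet> d \<le> Lc * t * (norm d)\<^sup>2"
    proof -
      have "G (y + t *\<^sub>R d) \<bullet> d - G y \<bullet> d = (G (y + t *\<^sub>R d) - G y) \<bullet> d" by (simp add: inner_diff_left)
      also have "\<dots> \<le> norm (G (y + t *\<^sub>R d) - G y) * norm d" by (rule norm_cauchy_schwarz)
      also have "\<dots> \<le> Lc * norm (t *\<^sub>R d) * norm d" using lip[of "y + t *\<^sub>R d" y]
        by (simp add: mult_right_mono)
      also have "\<dots> = Lc * t * (norm d)\<^sup>2" using t by (simp add: power2_eq_square)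
      finally show ?thesis .
    qed
    ultimately show "\<exists>D. (p has_real_derivative D) (at t) \<and> D \<le> 0" by (intro exI[of _ "G (y + t *\<^sub>R d) \<bullet> d - G y \<bullet> d - Lc / 2 * (2 * t) * (norm d)\<^sup>2"]) auto
  qed simp
  thus ?thesis unfolding p_def d_def by simp
qed


lemma nsq_add: "(norm (a + b))\<^sup>2 = (norm a)\<^sup>2 + 2 * (a \<bullet> b) + (norm (b::'a::real_inner))\<^sup>2"
  by (simp add: power2_norm_eq_inner inner_add_left inner_add_right inner_commute)

lemma nsq_diff: "(norm (a - b))\<^sup>2 = (norm a)\<^sup>2 - 2 * (a \<bullet> b) + (norm (b::'a::real_inner))\<^sup>2"
  by (simp add: power2_norm_eq_inner inner_diff_left inner_diff_right inner_commute)

lemma pcc_fin: "proper_closed_convex r \<Longrightarrow> r x \<noteq> \<infinity> \<Longrightarrow> r x = ereal (real_of_ereal (r x))"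
  unfolding proper_closed_convex_def by (cases "r x") auto

lemma epi_iff: "(x,t) \<in> epigraph_ext r \<longleftrightarrow> r x \<le> ereal t"
  by (simp add: epigraph_ext_def)

lemma pcc_epi: "proper_closed_convex r \<Longrightarrow> r x \<noteq> \<infinity> \<Longrightarrow> (x, real_of_ereal (r x)) \<in> epigraph_ext r"
  unfolding epi_iff by (metis pcc_fin order_refl)

lemma pcc_convex:
  assumes pcc: "proper_closed_convex r" and x: "r x \<noteq> \<infinity>" and z: "r z \<noteq> \<infinity>"
    and u: "0 \<le> u" "u \<le> 1"
  shows "r ((1-u) *\<^sub>R x + u *\<^sub>R z) \<noteq> \<infinity> \<and>
    real_of_ereal (r ((1-u) *\<^sub>R x + u *\<^sub>R z)) \<le> (1-u) * real_of_ereal (r x) + u * real_of_ereal (r z)"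
proof -
  have cv: "convex (epigraph_ext r)" and ninf: "\<And>x. r x \<noteq> -\<infinity>"
    using pcc unfolding proper_closed_convex_def by auto
  have ex: "(x, real_of_ereal (r x)) \<in> epigraph_ext r" using pcc_epi[OF pcc x] .
  have ez: "(z, real_of_ereal (r z)) \<in> epigraph_ext r" using pcc_epi[OF pcc z] .
  have "(1-u) *\<^sub>R (x, real_of_ereal (r x)) + u *\<^sub>R (z, real_of_ereal (r z)) \<in> epigraph_ext r"
    by (rule convexD[OF cv ex ez]) (use u in auto)
  hence le: "r ((1-u) *\<^sub>R x + u *\<^sub>R z) \<le> ereal ((1-u) * real_of_ereal (r x) + u * real_of_ereal (r z))"
    unfolding epigraph_ext_def by simp
  hence "r ((1-u) *\<^sub>R x + u *\<^sub>R z) \<noteq> \<infinity>" by auto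
  moreover have "real_of_ereal (r ((1-u) *\<^sub>R x + u *\<^sub>R z)) \<le> (1-u) * real_of_ereal (r x) + u * real_of_ereal (r z)"
    using le ninf[of "(1-u) *\<^sub>R x + u *\<^sub>R z"] \<open>r ((1-u) *\<^sub>R x + u *\<^sub>R z) \<noteq> \<infinity>\<close>
    by (cases "r ((1-u) *\<^sub>R x + u *\<^sub>R z)") auto
  ultimately show ?thesis by blast
qed

lemma pcc_minorant:
  fixes r :: "'a::euclidean_space \<Rightarrow> ereal"
  assumes pcc: "proper_closed_convex r"
  shows "\<exists>c b. \<forall>x. r x \<noteq> \<infinity> \<longrightarrow> b + c \<bullet> x \<le> real_of_ereal (r x)"
proof -
  have cv: "convex (epigraph_ext r)" and cl: "closed (epigraph_ext r)" and ninf: "\<And>x. r x \<noteq> -\<infinity>"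
    and ex: "\<exists>x. r x \<noteq> \<infinity>"
    using pcc unfolding proper_closed_convex_def by auto
  obtain x0 where x0: "r x0 \<noteq> \<infinity>" using ex by blast
  have f0: "r x0 = ereal (real_of_ereal (r x0))" using pcc_fin[OF pcc x0] .
  have "(x0, real_of_ereal (r x0) - 1) \<notin> epigraph_ext r"
    unfolding epi_iff by (subst f0) simp
  then obtain a b where ab: "a \<bullet> (x0, real_of_ereal (r x0) - 1) < b"
    "\<forall>q\<in>epigraph_ext r. a \<bullet> q > b"
    using separating_hyperplane_closed_point[OF cv cl] by blast
  obtain a1 a2 where a: "a = (a1, a2)" by (cases a)
  have e0: "(x0, real_of_ereal (r x0)) \<in> epigraph_ext r" using pcc_epi[OF pcc x0] .
  have "a1 \<bullet> x0 + a2 * real_of_ereal (r x0) > b" using ab(2) e0 a by auto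
  with ab(1) a have a2: "a2 > 0" by (simp add: algebra_simps)
  show ?thesis
  proof (intro exI allI impI)
    fix x assume x: "r x \<noteq> \<infinity>"
    have "(x, real_of_ereal (r x)) \<in> epigraph_ext r" using pcc_epi[OF pcc x] .
    hence "a1 \<bullet> x + a2 * real_of_ereal (r x) > b" using ab(2) a by auto
    hence "b / a2 - a1 \<bullet> x / a2 < real_of_ereal (r x)" using a2
      by (simp add: field_simps)
    thus "b / a2 + (-(1/a2) *\<^sub>R a1) \<bullet> x \<le> real_of_ereal (r x)" by simp
  qed
qed

lemma prox_exists:
  fixes r :: "'a::euclidean_space \<Rightarrow> ereal"
  assumes pcc: "proper_closed_convex r" and eta: "\<eta> > 0"
  shows "\<exists>p. r p \<noteq> \<infinity> \<and> (\<forall>z. r z \<noteq> \<infinity> \<longrightarrow>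
     (1/2) * (norm (p - y))\<^sup>2 + \<eta> * real_of_ereal (r p) \<le> (1/2) * (norm (z - y))\<^sup>2 + \<eta> * real_of_ereal (r z))"
proof -
  define rr where "rr = (\<lambda>x. real_of_ereal (r x))"
  obtain c b where cb: "\<And>x. r x \<noteq> \<infinity> \<Longrightarrow> b + c \<bullet> x \<le> rr x"
    using pcc_minorant[OF pcc] unfolding rr_def by blast
  have cl: "closed (epigraph_ext r)" and ninf: "\<And>x. r x \<noteq> -\<infinity>"
    and ex: "\<exists>x. r x \<noteq> \<infinity>"
    using pcc unfolding proper_closed_convex_def by auto
  obtain x0 where x0: "r x0 \<noteq> \<infinity>" using ex by blast
  define \<psi> where "\<psi> = (\<lambda>q::'a \<times> real. (1/2) * (norm (fst q - y))\<^sup>2 + \<eta> * snd q)"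
  define \<Phi>0 where "\<Phi>0 = \<psi> (x0, rr x0)"
  define K0 where "K0 = \<Phi>0 - \<eta> * b - \<eta> * (c \<bullet> y)"
  define U where "U = 2 * \<eta> * norm c + 2 * \<bar>K0\<bar> + 2"
  define lo where "lo = b - norm c * (norm y + U)"
  define hi where "hi = \<Phi>0 / \<eta>"
  define S where "S = epigraph_ext r \<inter> {q. \<psi> q \<le> \<Phi>0}"
  define C where "C = (cball y U \<times> {lo..hi}) \<inter> S"
  have inbox: "q \<in> C" if q: "q \<in> S" for q
  proof -
    obtain x t where qq: "q = (x,t)" by (cases q)
    have rx: "r x \<le> ereal t" and ps: "\<psi> (x,t) \<le> \<Phi>0" using q qq epi_iff[of x t r] unfolding S_def by auto
    have xf: "r x \<noteq> \<infinity>" using rx by auto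
    have "rr x \<le> t" using rx xf ninf[of x] unfolding rr_def by (cases "r x") auto
    hence bt: "b + c \<bullet> x \<le> t" using cb[OF xf] by linarith
    define u where "u = norm (x - y)"
    have cx: "c \<bullet> x \<ge> - norm c * u + c \<bullet> y"
    proof -
      have "c \<bullet> x = c \<bullet> (x - y) + c \<bullet> y" by (simp add: inner_diff_right)
      moreover have "c \<bullet> (x - y) \<ge> - (norm c * u)" unfolding u_def
        using norm_cauchy_schwarz[of "-c" "x - y"] by simp
      ultimately show ?thesis by linarith
    qed
    have ps': "(1/2) * u\<^sup>2 + \<eta> * t \<le> \<Phi>0" using ps unfolding \<psi>_def u_def by simp
    have "\<eta> * (b + c \<bullet> x) \<le> \<eta> * t" using bt eta by (simp add: mult_left_mono)
    hence "(1/2) * u\<^sup>2 + \<eta> * (b + c \<bullet> x) \<le> \<Phi>0" using ps' by linarith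
    moreover have "\<eta> * (c \<bullet> x) \<ge> \<eta> * (- norm c * u + c \<bullet> y)" using cx eta by (simp add: mult_left_mono)
    ultimately have key: "(1/2) * u\<^sup>2 - \<eta> * norm c * u \<le> K0" unfolding K0_def
      by (simp add: algebra_simps)
    have uU: "u \<le> U"
    proof (rule ccontr)
      assume "\<not> u \<le> U"
      hence uU: "u > U" by simp
      have "\<eta> * norm c \<ge> 0" using eta by simp
      hence h1: "(1/2) * u - \<eta> * norm c > \<bar>K0\<bar> + 1" and h2: "u > 2" using uU unfolding U_def by auto
      have "u * ((1/2) * u - \<eta> * norm c) > 2 * (\<bar>K0\<bar> + 1)"
        using h1 h2 by (intro mult_strict_mono') auto
      hence "(1/2) * u\<^sup>2 - \<eta> * norm c * u > K0" by (simp add: power2_eq_square algebra_simps)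
      thus False using key by simp
    qed
    have "\<eta> * t \<le> \<Phi>0" using ps' zero_le_power2[of u] by linarith
    hence "t \<le> hi" unfolding hi_def using eta by (simp add: field_simps)
    moreover have "lo \<le> t"
    proof -
      have "norm x \<le> norm y + u" unfolding u_def by (metis add.commute norm_triangle_sub)
      hence "norm c * norm x \<le> norm c * (norm y + U)" using uU by (simp add: mult_left_mono)
      moreover have "c \<bullet> x \<ge> - (norm c * norm x)" using norm_cauchy_schwarz[of "-c" x] by simp
      ultimately show ?thesis unfolding lo_def using bt by linarith
    qed
    moreover have "x \<in> cball y U" using uU unfolding u_def by (simp add: dist_norm norm_minus_commute)
    ultimately show ?thesis using q qq unfolding C_def by auto
  qed
  have contpsi: "continuous_on UNIV \<psi>" unfolding \<psi>_def by (intro continuous_intros)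
  have "compact C" unfolding C_def S_def
    by (intro compact_Int_closed compact_Times compact_cball compact_Icc closed_Int cl
        closed_Collect_le contpsi continuous_on_const)
  moreover have x0S: "(x0, rr x0) \<in> S" unfolding S_def \<Phi>0_def using pcc_epi[OF pcc x0] unfolding rr_def by simp
  hence "C \<noteq> {}" using inbox by blast
  ultimately obtain q where qC: "q \<in> C" and qmin: "\<And>q'. q' \<in> C \<Longrightarrow> \<psi> q \<le> \<psi> q'"
    using continuous_attains_inf[of C \<psi>] continuous_on_subset[OF contpsi] by blast
  obtain p tp where qq: "q = (p, tp)" by (cases q)
  have rp: "r p \<le> ereal tp" using qC qq epi_iff[of p tp r] unfolding C_def S_def by auto
  have pf: "r p \<noteq> \<infinity>" using rp by auto
  have rrp: "rr p \<le> tp" using rp pf ninf[of p] unfolding rr_def by (cases "r p") auto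
  have q_le0: "\<psi> q \<le> \<Phi>0" using qmin[OF inbox[OF x0S]] unfolding \<Phi>0_def .
  have Phip: "(1/2) * (norm (p - y))\<^sup>2 + \<eta> * rr p \<le> \<psi> q" unfolding qq \<psi>_def
    using rrp eta by simp
  show ?thesis
  proof (intro exI conjI allI impI)
    show "r p \<noteq> \<infinity>" by fact
    fix z assume zf: "r z \<noteq> \<infinity>"
    show "(1/2) * (norm (p - y))\<^sup>2 + \<eta> * real_of_ereal (r p) \<le> (1/2) * (norm (z - y))\<^sup>2 + \<eta> * real_of_ereal (r z)"
    proof (cases "\<psi> (z, rr z) \<le> \<Phi>0")
      case True
      hence "(z, rr z) \<in> S" unfolding S_def using pcc_epi[OF pcc zf] unfolding rr_def by simp
      hence "\<psi> q \<le> \<psi> (z, rr z)" using qmin inbox by blast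
      thus ?thesis using Phip unfolding \<psi>_def rr_def by simp
    next
      case False
      thus ?thesis using Phip q_le0 unfolding \<psi>_def rr_def by simp
    qed
  qed
qed

lemma lin_limit_nonneg:
  fixes A B :: real
  assumes B: "B \<ge> 0" and h: "\<And>t. 0 < t \<Longrightarrow> t \<le> 1 \<Longrightarrow> 0 \<le> A + t * B"
  shows "0 \<le> A"
proof (rule ccontr)
  assume "\<not> 0 \<le> A"
  hence A: "A < 0" by simp
  show False
  proof (cases "B = 0")
    case True thus False using h[of 1] A by simp
  next
    case False
    hence Bp: "B > 0" using B by simp
    define t where "t = min 1 (-A / (2*B))"
    have t: "0 < t" "t \<le> 1" unfolding t_def using A Bp by (auto simp: divide_neg_pos)
    have "t * B \<le> (-A / (2*B)) * B" unfolding t_def using Bp by (intro mult_right_mono) auto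
    also have "\<dots> = -A/2" using Bp by simp
    finally have "A + t * B < 0" using A by simp
    thus False using h[OF t] by simp
  qed
qed

lemma prox_varineq:
  fixes r :: "'a::euclidean_space \<Rightarrow> ereal"
  assumes pcc: "proper_closed_convex r" and eta: "\<eta> > 0" and pf: "r p \<noteq> \<infinity>"
    and pmin: "\<And>z. r z \<noteq> \<infinity> \<Longrightarrow>
     (1/2) * (norm (p - y))\<^sup>2 + \<eta> * real_of_ereal (r p) \<le> (1/2) * (norm (z - y))\<^sup>2 + \<eta> * real_of_ereal (r z)"
    and zf: "r z \<noteq> \<infinity>"
  shows "\<eta> * real_of_ereal (r p) + (1/2) * (norm (p - y))\<^sup>2 + (1/2) * (norm (z - p))\<^sup>2
         \<le> \<eta> * real_of_ereal (r z) + (1/2) * (norm (z - y))\<^sup>2"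
proof -
  define rr where "rr = (\<lambda>x. real_of_ereal (r x))"
  define A where "A = (p - y) \<bullet> (z - p) + \<eta> * (rr z - rr p)"
  define B where "B = (1/2) * (norm (z - p))\<^sup>2"
  have "0 \<le> A"
  proof (rule lin_limit_nonneg[of B])
    show "B \<ge> 0" unfolding B_def by simp
    fix t :: real assume t: "0 < t" "t \<le> 1"
    define zt where "zt = (1-t) *\<^sub>R p + t *\<^sub>R z"
    have cvx: "r zt \<noteq> \<infinity>" "rr zt \<le> (1-t) * rr p + t * rr z"
      using pcc_convex[OF pcc pf zf, of t] t unfolding zt_def rr_def by auto
    have m: "(1/2) * (norm (p - y))\<^sup>2 + \<eta> * rr p \<le> (1/2) * (norm (zt - y))\<^sup>2 + \<eta> * rr zt"
      using pmin[OF cvx(1)] unfolding rr_def .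
    have e: "zt - y = (p - y) + t *\<^sub>R (z - p)" unfolding zt_def by (simp add: algebra_simps)
    have n: "(norm (zt - y))\<^sup>2 = (norm (p - y))\<^sup>2 + 2 * t * ((p - y) \<bullet> (z - p)) + t\<^sup>2 * (norm (z - p))\<^sup>2"
      unfolding e nsq_add by (simp add: power_mult_distrib)
    have "\<eta> * rr zt \<le> \<eta> * ((1-t) * rr p + t * rr z)" using cvx(2) eta by (simp add: mult_left_mono)
    hence "0 \<le> t * ((p - y) \<bullet> (z - p)) + (1/2) * t\<^sup>2 * (norm (z - p))\<^sup>2 + \<eta> * t * (rr z - rr p)"
      using m n by (simp add: algebra_simps)
    also have "\<dots> = t * (A + t * B)" unfolding A_def B_def by (simp add: algebra_simps power2_eq_square)
    finally show "0 \<le> A + t * B" using t by (simp add: zero_le_mult_iff)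
  qed
  moreover have "z - y = (z - p) + (p - y)" by simp
  hence "(norm (z - y))\<^sup>2 = (norm (z - p))\<^sup>2 + 2 * ((z - p) \<bullet> (p - y)) + (norm (p - y))\<^sup>2"
    by (metis nsq_add)
  ultimately show ?thesis unfolding A_def rr_def by (simp add: inner_commute algebra_simps)
qed

lemma prox_char:
  fixes r :: "'a::euclidean_space \<Rightarrow> ereal"
  assumes pcc: "proper_closed_convex r" and eta: "\<eta> > 0"
  shows "r (prox r \<eta> y) \<noteq> \<infinity> \<and> (\<forall>z. r z \<noteq> \<infinity> \<longrightarrow>
     \<eta> * real_of_ereal (r (prox r \<eta> y)) + (1/2) * (norm (prox r \<eta> y - y))\<^sup>2 + (1/2) * (norm (z - prox r \<eta> y))\<^sup>2
         \<le> \<eta> * real_of_ereal (r z) + (1/2) * (norm (z - y))\<^sup>2)"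
proof -
  have ninf: "\<And>x. r x \<noteq> -\<infinity>" using pcc unfolding proper_closed_convex_def by auto
  obtain p where pf: "r p \<noteq> \<infinity>" and pmin: "\<And>z. r z \<noteq> \<infinity> \<Longrightarrow>
     (1/2) * (norm (p - y))\<^sup>2 + \<eta> * real_of_ereal (r p) \<le> (1/2) * (norm (z - y))\<^sup>2 + \<eta> * real_of_ereal (r z)"
    using prox_exists[OF pcc eta, of y] by blast
  have vi: "\<eta> * real_of_ereal (r p) + (1/2) * (norm (p - y))\<^sup>2 + (1/2) * (norm (z - p))\<^sup>2
         \<le> \<eta> * real_of_ereal (r z) + (1/2) * (norm (z - y))\<^sup>2" if zf: "r z \<noteq> \<infinity>" for z
    by (rule prox_varineq[OF pcc eta pf _ zf]) (rule pmin)
  have ee: "ereal a + ereal \<eta> * r x = ereal (a + \<eta> * real_of_ereal (r x))" if "r x \<noteq> \<infinity>" for a x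
    using pcc_fin[OF pcc that] by (metis plus_ereal.simps(1) times_ereal.simps(1))
  have inf: "ereal a + ereal \<eta> * r x = \<infinity>" if "r x = \<infinity>" for a x
    using that eta by simp
  have "prox r \<eta> y = p"
    unfolding prox_def
  proof (rule the_equality)
    show "\<forall>z. ereal ((1/2) * (norm (p - y))\<^sup>2) + ereal \<eta> * r p
                              \<le> ereal ((1/2) * (norm (z - y))\<^sup>2) + ereal \<eta> * r z"
    proof
      fix z show "ereal ((1/2) * (norm (p - y))\<^sup>2) + ereal \<eta> * r p
                              \<le> ereal ((1/2) * (norm (z - y))\<^sup>2) + ereal \<eta> * r z"
      proof (cases "r z = \<infinity>")
        case True thus ?thesis using inf by simp
      next
        case False thus ?thesis using ee[OF pf] ee[OF False] pmin[OF False] by simp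
      qed
    qed
  next
    fix x assume h: "\<forall>z. ereal ((1/2) * (norm (x - y))\<^sup>2) + ereal \<eta> * r x
                              \<le> ereal ((1/2) * (norm (z - y))\<^sup>2) + ereal \<eta> * r z"
    hence h1: "ereal ((1/2) * (norm (x - y))\<^sup>2) + ereal \<eta> * r x
                              \<le> ereal ((1/2) * (norm (p - y))\<^sup>2) + ereal \<eta> * r p" by blast
    have xf: "r x \<noteq> \<infinity>"
    proof
      assume "r x = \<infinity>"
      hence "ereal ((1/2) * (norm (x - y))\<^sup>2) + ereal \<eta> * r x = \<infinity>" using inf by blast
      hence "\<infinity> \<le> ereal ((1/2) * (norm (p - y))\<^sup>2) + ereal \<eta> * r p" by (metis h1)
      thus False unfolding ee[OF pf] by simp
    qed
    have "(1/2) * (norm (x - y))\<^sup>2 + \<eta> * real_of_ereal (r x) \<le> (1/2) * (norm (p - y))\<^sup>2 + \<eta> * real_of_ereal (r p)"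
      using h1 ee[OF pf] ee[OF xf] by simp
    moreover note vi[OF xf]
    ultimately have "(norm (x - p))\<^sup>2 \<le> 0" by linarith
    thus "x = p" by simp
  qed
  thus ?thesis using pf vi by simp
qed


lemma descent_lower:
  fixes \<phi> :: "'a::euclidean_space \<Rightarrow> real" and G :: "'a \<Rightarrow> 'a"
  assumes der: "\<And>y. (\<phi> has_derivative (\<lambda>h. G y \<bullet> h)) (at y)"
    and lip: "\<And>y z. norm (G y - G z) \<le> Lc * norm (y - z)"
    and Lc: "Lc \<ge> 0"
  shows "\<phi> z \<ge> \<phi> y + G y \<bullet> (z - y) - Lc / 2 * (norm (z - y))\<^sup>2"
proof -
  have der': "((\<lambda>x. - \<phi> x) has_derivative (\<lambda>h. (- G y) \<bullet> h)) (at y)" for y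
    using has_derivative_minus[OF der[of y]] by simp
  have lip': "norm ((- G y) - (- G z)) \<le> Lc * norm (y - z)" for y z
    using lip[of y z] by (simp add: norm_minus_commute)
  show ?thesis using descent_upper[where \<phi>="\<lambda>x. - \<phi> x" and G="\<lambda>x. - G x", OF der' lip' Lc, of z y]
    by (simp add: inner_minus_left)
qed

lemma sum_bounds:
  fixes \<phi> :: "nat \<Rightarrow> 'a::euclidean_space \<Rightarrow> real" and G :: "nat \<Rightarrow> 'a \<Rightarrow> 'a"
  assumes der: "\<And>i y. i \<in> I \<Longrightarrow> (\<phi> i has_derivative (\<lambda>h. G i y \<bullet> h)) (at y)"
    and lip: "\<And>i y z. i \<in> I \<Longrightarrow> norm (G i y - G i z) \<le> Lc i * norm (y - z)"
    and Lc: "\<And>i. i \<in> I \<Longrightarrow> Lc i \<ge> 0"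
  shows "(\<Sum>i\<in>I. \<phi> i z) \<le> (\<Sum>i\<in>I. \<phi> i y) + (\<Sum>i\<in>I. G i y) \<bullet> (z - y) + (\<Sum>i\<in>I. Lc i) / 2 * (norm (z - y))\<^sup>2"
    and "(\<Sum>i\<in>I. \<phi> i z) \<ge> (\<Sum>i\<in>I. \<phi> i y) + (\<Sum>i\<in>I. G i y) \<bullet> (z - y) - (\<Sum>i\<in>I. Lc i) / 2 * (norm (z - y))\<^sup>2"
proof -
  have "(\<Sum>i\<in>I. \<phi> i z) \<le> (\<Sum>i\<in>I. \<phi> i y + G i y \<bullet> (z - y) + Lc i / 2 * (norm (z - y))\<^sup>2)"
    by (rule sum_mono) (rule descent_upper[OF der lip Lc])
  thus "(\<Sum>i\<in>I. \<phi> i z) \<le> (\<Sum>i\<in>I. \<phi> i y) + (\<Sum>i\<in>I. G i y) \<bullet> (z - y) + (\<Sum>i\<in>I. Lc i) / 2 * (norm (z - y))\<^sup>2"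
    by (simp add: sum.distrib inner_sum_left sum_distrib_right sum_divide_distrib)
  have "(\<Sum>i\<in>I. \<phi> i z) \<ge> (\<Sum>i\<in>I. \<phi> i y + G i y \<bullet> (z - y) - Lc i / 2 * (norm (z - y))\<^sup>2)"
    by (rule sum_mono) (rule descent_lower[OF der lip Lc])
  thus "(\<Sum>i\<in>I. \<phi> i z) \<ge> (\<Sum>i\<in>I. \<phi> i y) + (\<Sum>i\<in>I. G i y) \<bullet> (z - y) - (\<Sum>i\<in>I. Lc i) / 2 * (norm (z - y))\<^sup>2"
    by (simp add: sum.distrib sum_subtractf inner_sum_left sum_distrib_right sum_divide_distrib)
qed

lemma norm_convex_comb:
  "(norm ((1-t) *\<^sub>R a + t *\<^sub>R b))\<^sup>2 = (1-t) * (norm a)\<^sup>2 + t * (norm (b::'a::real_inner))\<^sup>2 - t * (1-t) * (norm (a - b))\<^sup>2"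
  by (simp add: power2_norm_eq_inner inner_add_left inner_add_right inner_diff_left inner_diff_right
      inner_commute algebra_simps)

lemma young_ineq:
  assumes "\<eta> > 0"
  shows "e \<bullet> w - (1/(2*\<eta>)) * (norm w)\<^sup>2 \<le> (\<eta>/2) * (norm (e::'a::real_inner))\<^sup>2"
proof -
  have "0 \<le> (norm (\<eta> *\<^sub>R e - w))\<^sup>2" by simp
  also have "\<dots> = \<eta>\<^sup>2 * (norm e)\<^sup>2 - 2 * \<eta> * (e \<bullet> w) + (norm w)\<^sup>2"
    by (simp add: nsq_diff power_mult_distrib)
  finally have "0 \<le> (\<eta>\<^sup>2 * (norm e)\<^sup>2 - 2 * \<eta> * (e \<bullet> w) + (norm w)\<^sup>2) / (2*\<eta>)" using assms by simp
  also have "\<dots> = (\<eta>/2) * (norm e)\<^sup>2 - e \<bullet> w + (1/(2*\<eta>)) * (norm w)\<^sup>2"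
    using assms by (simp add: field_simps power2_eq_square)
  finally show ?thesis by simp
qed

lemma path_bound:
  fixes x :: "nat \<Rightarrow> 'a::real_normed_vector"
  shows "s \<le> k \<Longrightarrow> norm (x k - x (k - s)) \<le> (\<Sum>d<s. norm (x (Suc (k - Suc d)) - x (k - Suc d)))"
proof (induction s)
  case 0 then show ?case by simp
next
  case (Suc s)
  have e: "Suc (k - Suc s) = k - s" using Suc.prems by simp
  have "norm (x k - x (k - Suc s)) \<le> norm (x k - x (k - s)) + norm (x (k - s) - x (k - Suc s))"
    using norm_triangle_ineq[of "x k - x (k - s)" "x (k - s) - x (k - Suc s)"] by simp
  also have "\<dots> \<le> (\<Sum>d<s. norm (x (Suc (k - Suc d)) - x (k - Suc d))) + norm (x (Suc (k - Suc s)) - x (k - Suc s))"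
    using Suc by (simp add: e)
  finally show ?case by simp
qed

theorem theorem2:
  fixes m K a :: nat
    and fi :: "nat \<Rightarrow> 'a::euclidean_space \<Rightarrow> real"
    and gradfi :: "nat \<Rightarrow> 'a \<Rightarrow> 'a"
    and Li :: "nat \<Rightarrow> real"
    and \<mu> \<eta> :: real
    and r :: "'a \<Rightarrow> ereal"
    and xstar :: 'a
    and \<tau> :: "nat \<Rightarrow> nat \<Rightarrow> nat"
    and x :: "nat \<Rightarrow> 'a"
  defines "f \<equiv> (\<lambda>y. (1 / real m) * (\<Sum>i=1..m. fi i y))"
    and "L \<equiv> (1 / real m) * (\<Sum>i=1..m. Li i)"
    and "F \<equiv> (\<lambda>y. ereal ((1 / real m) * (\<Sum>i=1..m. fi i y)) + r y)"
    and "Q \<equiv> ((1 / real m) * (\<Sum>i=1..m. Li i)) / \<mu>"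
    and "g \<equiv> (\<lambda>k. (1 / real m) *\<^sub>R (\<Sum>i=1..m. gradfi i (x (\<tau> i k))))"
  assumes m_pos: "m \<ge> 1"
    and grad: "\<And>i y. i \<in> {1..m} \<Longrightarrow> (fi i has_derivative (\<lambda>h. gradfi i y \<bullet> h)) (at y)"
    and Li_nonneg: "\<And>i. i \<in> {1..m} \<Longrightarrow> Li i \<ge> 0"
    and lip: "\<And>i y z. i \<in> {1..m} \<Longrightarrow> norm (gradfi i y - gradfi i z) \<le> Li i * norm (y - z)"
    and mu_pos: "\<mu> > 0"
    and strong: "convex_on UNIV (\<lambda>y. f y - \<mu> / 2 * (norm y)\<^sup>2)"
    and r_pcc: "proper_closed_convex r"
    and xstar_min: "\<And>z. F xstar \<le> F z"
    and K_ge: "K \<ge> 1"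
    and a_ge: "a \<ge> 3"
    and eta_pos: "\<eta> > 0"
    and eta_le: "\<eta> \<le> 1 / (3 * L * (real K + 1)) *
                   (1 / (144 * (real a * real K + 1) * real K * Q\<^sup>2)) powr (1 / (real a - 2))"
    and tau_bounds: "\<And>i k. k - K \<le> \<tau> i k \<and> \<tau> i k \<le> k"
    and iter: "\<And>k. x (Suc k) = prox r \<eta> (x k - \<eta> *\<^sub>R g k)"
  shows "\<forall>k \<ge> a * K + 1.
           F (x k) - F xstar \<le>
             ereal ((1 - \<eta> * \<mu> / 18) powr ((real k + 1) / (real a * real K + 1) - 1)) *
             Max ((\<lambda>j. F (x j) - F xstar) ` {0..a * K})"
proof -
  define rr where "rr = (\<lambda>y. real_of_ereal (r y))"
  define gf where "gf = (\<lambda>y. (1 / real m) *\<^sub>R (\<Sum>i=1..m. gradfi i y))"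
  have mpos: "real m > 0" using m_pos by simp
  have ninf: "\<And>y. r y \<noteq> -\<infinity>" using r_pcc unfolding proper_closed_convex_def by auto
  have fup: "f z \<le> f y + gf y \<bullet> (z - y) + L / 2 * (norm (z - y))\<^sup>2" for y z
  proof -
    have "(\<Sum>i=1..m. fi i z) \<le> (\<Sum>i=1..m. fi i y) + (\<Sum>i=1..m. gradfi i y) \<bullet> (z - y) + (\<Sum>i=1..m. Li i) / 2 * (norm (z - y))\<^sup>2"
      by (rule sum_bounds(1)[OF grad lip Li_nonneg])
    hence "(1/real m) * (\<Sum>i=1..m. fi i z) \<le> (1/real m) * ((\<Sum>i=1..m. fi i y) + (\<Sum>i=1..m. gradfi i y) \<bullet> (z - y) + (\<Sum>i=1..m. Li i) / 2 * (norm (z - y))\<^sup>2)"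
      using mpos by (intro mult_left_mono) auto
    thus ?thesis unfolding f_def gf_def L_def by (simp add: algebra_simps)
  qed
  have flo: "f z \<ge> f y + gf y \<bullet> (z - y) - L / 2 * (norm (z - y))\<^sup>2" for y z
  proof -
    have "(\<Sum>i=1..m. fi i z) \<ge> (\<Sum>i=1..m. fi i y) + (\<Sum>i=1..m. gradfi i y) \<bullet> (z - y) - (\<Sum>i=1..m. Li i) / 2 * (norm (z - y))\<^sup>2"
      by (rule sum_bounds(2)[OF grad lip Li_nonneg])
    hence "(1/real m) * (\<Sum>i=1..m. fi i z) \<ge> (1/real m) * ((\<Sum>i=1..m. fi i y) + (\<Sum>i=1..m. gradfi i y) \<bullet> (z - y) - (\<Sum>i=1..m. Li i) / 2 * (norm (z - y))\<^sup>2)"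
      using mpos by (intro mult_left_mono) auto
    thus ?thesis unfolding f_def gf_def L_def by (simp add: algebra_simps)
  qed
  have muL: "\<mu> \<le> L"
  proof -
    obtain b :: 'a where b: "b \<in> Basis" using nonempty_Basis by blast
    have nb: "norm b = 1" using b by simp
    have "f ((1 - 1/2) *\<^sub>R b + (1/2) *\<^sub>R (-b)) - \<mu> / 2 * (norm ((1 - 1/2) *\<^sub>R b + (1/2) *\<^sub>R (-b)))\<^sup>2
          \<le> (1 - 1/2) * (f b - \<mu> / 2 * (norm b)\<^sup>2) + (1/2) * (f (-b) - \<mu> / 2 * (norm (-b))\<^sup>2)"
      using convex_onD[OF strong, of "1/2" b "-b"] by simp
    hence "f 0 \<le> (1/2) * (f b - \<mu> / 2) + (1/2) * (f (-b) - \<mu> / 2)" using nb by simp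
    moreover have "f b \<le> f 0 + gf 0 \<bullet> b + L / 2" using fup[where y=0 and z=b] nb by simp
    moreover have "f (-b) \<le> f 0 - gf 0 \<bullet> b + L / 2" using fup[where y=0 and z="-b"] nb by simp
    ultimately show ?thesis by argo
  qed
  have Lpos: "L > 0" using muL mu_pos by simp
  have QL: "Q = L / \<mu>" unfolding Q_def L_def ..
  have Q1: "Q \<ge> 1" using QL muL mu_pos by simp
  have Kr: "real K \<ge> 1" using K_ge by simp
  have base_le: "1 / (144 * (real a * real K + 1) * real K * Q\<^sup>2) \<le> 1"
  proof -
    have "Q\<^sup>2 \<ge> 1" using Q1 by (simp add: one_le_power)
    moreover have "real a * real K + 1 \<ge> 1" by simp
    ultimately have h1: "1 * 1 \<le> real K * Q\<^sup>2" using Kr by (intro mult_mono) auto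
    have "1 * 1 \<le> (real a * real K + 1) * (real K * Q\<^sup>2)" using h1 by (intro mult_mono) auto
    hence "1 \<le> (real a * real K + 1) * real K * Q\<^sup>2" by (simp add: mult.assoc)
    hence "1 \<le> 144 * (real a * real K + 1) * real K * Q\<^sup>2" by linarith
    thus ?thesis by simp
  qed
  have P_le: "(1 / (144 * (real a * real K + 1) * real K * Q\<^sup>2)) powr (1 / (real a - 2)) \<le> 1"
    by (rule powr_le1) (use a_ge base_le in auto)
  have eta_le1: "\<eta> \<le> 1 / (3 * L * (real K + 1))"
  proof -
    have "0 \<le> 1 / (3 * L * (real K + 1))" using Lpos by simp
    hence "1 / (3 * L * (real K + 1)) * (1 / (144 * (real a * real K + 1) * real K * Q\<^sup>2)) powr (1 / (real a - 2))
        \<le> 1 / (3 * L * (real K + 1)) * 1" by (rule mult_left_mono[OF P_le])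
    thus ?thesis using eta_le by simp
  qed
  have u_le: "\<eta> * L * (real K + 1) \<le> 1/3"
  proof -
    have cpos: "3 * L * (real K + 1) > 0" using Lpos by simp
    have "\<eta> * (3 * L * (real K + 1)) \<le> 1" using eta_le1 cpos by (simp add: le_divide_eq)
    moreover have "\<eta> * (3 * L * (real K + 1)) = 3 * (\<eta> * L * (real K + 1))" by (simp add: algebra_simps)
    ultimately show ?thesis by linarith
  qed
  have uK: "\<eta> * L * real K \<le> 1/3" and u6: "\<eta> * L \<le> 1/6"
  proof -
    have "\<eta> * L \<ge> 0" using Lpos eta_pos by simp
    thus "\<eta> * L * real K \<le> 1/3" using u_le by (simp add: algebra_simps)
    have "\<eta> * L * 2 \<le> \<eta> * L * (real K + 1)" using Kr \<open>\<eta> * L \<ge> 0\<close> by (intro mult_left_mono) auto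
    thus "\<eta> * L \<le> 1/6" using u_le by simp
  qed
  have emu: "\<eta> * \<mu> \<le> \<eta> * L" using muL eta_pos by simp
  have emupos: "\<eta> * \<mu> > 0" using eta_pos mu_pos by simp
  define \<theta> where "\<theta> = \<eta> * \<mu> / (1 + \<eta> * \<mu> + \<eta> * L)"
  define \<alpha> where "\<alpha> = \<eta> * L\<^sup>2 * real K / 2"
  define \<beta> where "\<beta> = 1 / (1 - \<theta> * real K)"
  define \<gamma> where "\<gamma> = 1 / (2 * \<eta>) - L / 2"
  have den: "1 + \<eta> * \<mu> + \<eta> * L \<ge> 1" "1 + \<eta> * \<mu> + \<eta> * L \<le> 2" using emu u6 emupos by auto
  have th_pos: "\<theta> > 0" unfolding \<theta>_def using emupos den by simp
  have th_le: "\<theta> \<le> \<eta> * \<mu>"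
  proof -
    have "\<eta> * \<mu> / (1 + \<eta> * \<mu> + \<eta> * L) \<le> \<eta> * \<mu> / 1"
      by (rule divide_left_mono) (use den emupos in auto)
    thus ?thesis unfolding \<theta>_def by simp
  qed
  have th_ge: "\<theta> \<ge> \<eta> * \<mu> / 2" unfolding \<theta>_def using emupos den
    by (intro divide_left_mono) auto
  have th_id: "\<theta> * (1 / \<eta> + L) = \<mu> * (1 - \<theta>)"
  proof -
    define Dn where "Dn = 1 + \<eta> * \<mu> + \<eta> * L"
    have Dpos: "Dn > 0" using den unfolding Dn_def by simp
    have th: "\<theta> = \<eta> * \<mu> / Dn" unfolding \<theta>_def Dn_def ..
    have e0: "1 - \<theta> = (Dn - \<eta> * \<mu>) / Dn" unfolding th using Dpos by (simp add: field_simps)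
    have "Dn - \<eta> * \<mu> = 1 + \<eta> * L" unfolding Dn_def by simp
    hence e1: "1 - \<theta> = (1 + \<eta> * L) / Dn" using e0 by simp
    have e2: "1 / \<eta> + L = (1 + \<eta> * L) / \<eta>" using eta_pos by (simp add: field_simps)
    have "\<theta> * (1 / \<eta> + L) = (\<eta> * \<mu> / Dn) * ((1 + \<eta> * L) / \<eta>)" by (simp only: th e2)
    also have "\<dots> = \<mu> * ((1 + \<eta> * L) / Dn)" using eta_pos Dpos by (simp add: field_simps)
    also have "\<dots> = \<mu> * (1 - \<theta>)" by (simp only: e1)
    finally show ?thesis .
  qed
  have thK: "\<theta> * real K \<le> 1/3"
  proof -
    have "\<theta> * real K \<le> \<eta> * L * real K" using th_le emu Kr by (intro mult_right_mono) auto
    thus ?thesis using uK by simp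
  qed
  have th1: "\<theta> \<le> 1/6" using th_le emu u6 by simp
  have beta_id: "\<beta> * (1 - \<theta> * real K) = 1" unfolding \<beta>_def using thK by simp
  have pos1: "1 - \<theta> * real K > 0" using thK by simp
  have thKnn: "\<theta> * real K \<ge> 0" using th_pos Kr by simp
  have beta_ge: "\<beta> \<ge> 1" unfolding \<beta>_def using pos1 thKnn by (simp add: le_divide_eq)
  have beta_le: "\<beta> \<le> 3/2" unfolding \<beta>_def using pos1 thK by (simp add: divide_le_eq)
  have alpha_nn: "\<alpha> \<ge> 0" unfolding \<alpha>_def using eta_pos by simp
  have abK: "\<alpha> * \<beta> * real K \<le> \<gamma>"
  proof -
    have sq: "(\<eta> * L * real K)\<^sup>2 \<le> 1/9"
    proof -
      have "(\<eta> * L * real K)\<^sup>2 \<le> (1/3)\<^sup>2" using uK Lpos eta_pos by (intro power_mono) auto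
      thus ?thesis by (simp add: power2_eq_square)
    qed
    have "\<alpha> * \<beta> \<le> \<alpha> * (3/2)" using beta_le alpha_nn by (rule mult_left_mono)
    hence "\<alpha> * \<beta> * real K \<le> \<alpha> * (3/2) * real K" using Kr by (intro mult_right_mono) auto
    also have "\<dots> = (3/2) * (\<eta> * L * real K)\<^sup>2 / (2 * \<eta>)" unfolding \<alpha>_def using eta_pos
      by (simp add: field_simps power2_eq_square)
    also have "\<dots> \<le> (1 - \<eta> * L) / (2 * \<eta>)" using sq u6 eta_pos by (intro divide_right_mono) auto
    also have "\<dots> = \<gamma>" unfolding \<gamma>_def using eta_pos by (simp add: field_simps)
    finally show ?thesis .
  qed
  have rho_pos: "1 - \<eta> * \<mu> / 18 > 0" using emu u6 by simp
  have rho_le: "1 - \<eta> * \<mu> / 18 \<le> 1" using emupos by simp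
  have th_rho: "1 - \<theta> \<le> 1 - \<eta> * \<mu> / 18" using th_ge emupos by simp
  have Fe: "F y = ereal (f y) + r y" for y unfolding F_def f_def ..
  obtain z0 where z0: "r z0 \<noteq> \<infinity>" using r_pcc unfolding proper_closed_convex_def by auto
  have Fz0: "F z0 = ereal (f z0 + rr z0)" unfolding Fe rr_def using pcc_fin[OF r_pcc z0]
    by (metis plus_ereal.simps(1))
  have xsf: "r xstar \<noteq> \<infinity>"
  proof
    assume "r xstar = \<infinity>"
    hence "F xstar = \<infinity>" unfolding Fe by simp
    thus False using xstar_min[of z0] Fz0 by simp
  qed
  define Fs where "Fs = f xstar + rr xstar"
  have FsE: "F xstar = ereal Fs" unfolding Fe Fs_def rr_def using pcc_fin[OF r_pcc xsf]
    by (metis plus_ereal.simps(1))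
  have cpos: "(1 - \<eta> * \<mu> / 18) powr ((real k + 1) / (real a * real K + 1) - 1) > 0" for k
    using rho_pos by simp
  show ?thesis
  proof (cases "r (x 0) = \<infinity>")
    case True
    have "F (x 0) - F xstar = \<infinity>" unfolding Fe FsE using True by simp
    moreover have "F (x 0) - F xstar \<le> Max ((\<lambda>j. F (x j) - F xstar) ` {0..a * K})"
      by (rule Max_ge) auto
    ultimately have Minf: "Max ((\<lambda>j. F (x j) - F xstar) ` {0..a * K}) = \<infinity>" by simp
    show ?thesis unfolding Minf using cpos by simp
  next
    case False
    have dom: "r (x k) \<noteq> \<infinity>" for k
    proof (cases k)
      case 0 thus ?thesis using False by simp
    next
      case (Suc j) thus ?thesis using iter[of j] prox_char[OF r_pcc eta_pos] by simp
    qed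
    define Fr where "Fr = (\<lambda>k. f (x k) + rr (x k) - Fs)"
    have Fxk: "F (x k) = ereal (f (x k) + rr (x k))" for k unfolding Fe rr_def using pcc_fin[OF r_pcc dom[of k]]
      by (metis plus_ereal.simps(1))
    have FrE: "F (x k) - F xstar = ereal (Fr k)" for k unfolding Fxk FsE Fr_def by simp
    have Frnn: "Fr k \<ge> 0" for k using xstar_min[of "x k"] unfolding FsE Fxk Fr_def by simp
    define D where "D = (\<lambda>k. norm (x (Suc k) - x k))"
    define Dd where "Dd = (\<lambda>k d. if Suc d \<le> k then D (k - Suc d) else 0)"
    define T where "T = (\<lambda>k. \<Sum>d<K. (Dd k d)\<^sup>2)"
    define S where "S = (\<lambda>k. \<Sum>d<K. (real K - real d) * (Dd k d)\<^sup>2)"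
    define W where "W = (\<lambda>k. Fr k + \<alpha> * \<beta> * S k)"
    have Ddnn: "Dd k d \<ge> 0" for k d unfolding Dd_def D_def by simp
    have epsb: "(norm (g k - gf (x k)))\<^sup>2 \<le> L\<^sup>2 * (real K * T k)" for k
    proof -
      define Bs where "Bs = (\<Sum>d<K. Dd k d)"
      have pb: "norm (x (\<tau> i k) - x k) \<le> Bs" for i
      proof -
        define s where "s = k - \<tau> i k"
        have sk: "s \<le> k" and ks: "k - s = \<tau> i k" and sK: "s \<le> K"
          using tau_bounds[of k i] unfolding s_def by auto
        have "norm (x (\<tau> i k) - x k) = norm (x k - x (k - s))" unfolding ks by (rule norm_minus_commute)
        also have "\<dots> \<le> (\<Sum>d<s. norm (x (Suc (k - Suc d)) - x (k - Suc d)))" by (rule path_bound[OF sk])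
        also have "\<dots> = (\<Sum>d<s. Dd k d)" using sk by (intro sum.cong) (auto simp: Dd_def D_def)
        also have "\<dots> \<le> Bs" unfolding Bs_def using sK Ddnn by (intro sum_mono2) auto
        finally show ?thesis .
      qed
      have epsE: "g k - gf (x k) = (1 / real m) *\<^sub>R (\<Sum>i=1..m. gradfi i (x (\<tau> i k)) - gradfi i (x k))"
        unfolding g_def gf_def by (simp add: sum_subtractf scaleR_diff_right)
      have "norm (g k - gf (x k)) \<le> (1 / real m) * (\<Sum>i=1..m. norm (gradfi i (x (\<tau> i k)) - gradfi i (x k)))"
        unfolding epsE using mpos by (simp add: norm_sum divide_right_mono)
      also have "\<dots> \<le> (1 / real m) * (\<Sum>i=1..m. Li i * Bs)"
      proof -
        have "(\<Sum>i=1..m. norm (gradfi i (x (\<tau> i k)) - gradfi i (x k))) \<le> (\<Sum>i=1..m. Li i * Bs)"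
        proof (rule sum_mono)
          fix i assume i: "i \<in> {1..m}"
          have "norm (gradfi i (x (\<tau> i k)) - gradfi i (x k)) \<le> Li i * norm (x (\<tau> i k) - x k)" by (rule lip[OF i])
          also have "\<dots> \<le> Li i * Bs" using pb[of i] Li_nonneg[OF i] by (rule mult_left_mono)
          finally show "norm (gradfi i (x (\<tau> i k)) - gradfi i (x k)) \<le> Li i * Bs" .
        qed
        thus ?thesis using mpos by (intro mult_left_mono) auto
      qed
      also have "\<dots> = L * Bs" unfolding L_def by (simp add: sum_distrib_right)
      finally have nb: "norm (g k - gf (x k)) \<le> L * Bs" .
      have Bsq: "Bs\<^sup>2 \<le> real K * T k"
      proof -
        have "Bs\<^sup>2 = (\<Sum>d<K. Dd k d * 1)\<^sup>2" unfolding Bs_def by simp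
        also have "\<dots> \<le> (\<Sum>d<K. (Dd k d)\<^sup>2) * (\<Sum>d<K. (1::real)\<^sup>2)" by (rule Cauchy_Schwarz_ineq_sum)
        also have "\<dots> = real K * T k" unfolding T_def by simp
        finally show ?thesis .
      qed
      have "(norm (g k - gf (x k)))\<^sup>2 \<le> (L * Bs)\<^sup>2" using nb by (intro power_mono) auto
      also have "\<dots> = L\<^sup>2 * Bs\<^sup>2" by (simp add: power_mult_distrib)
      also have "\<dots> \<le> L\<^sup>2 * (real K * T k)" using Bsq by (intro mult_left_mono) auto
      finally show ?thesis .
    qed
    have stepP: "Fr (Suc k) \<le> (1 - \<theta>) * Fr k + \<alpha> * T k - \<gamma> * (D k)\<^sup>2" for k
    proof -
      define y where "y = x k"
      define p where "p = x (Suc k)"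
      define G where "G = g k"
      define zz where "zz = (1 - \<theta>) *\<^sub>R y + \<theta> *\<^sub>R xstar"
      define \<Delta> where "\<Delta> = (norm (y - xstar))\<^sup>2"
      define Z where "Z = (norm (zz - p))\<^sup>2"
      define \<epsilon> where "\<epsilon> = G - gf y"
      define c where "c = 1 / (2 * \<eta>)"
      define A1 where "A1 = G \<bullet> (p - y)"
      define A2 where "A2 = G \<bullet> (zz - y)"
      define B1 where "B1 = gf y \<bullet> (p - y)"
      define B2 where "B2 = gf y \<bullet> (zz - y)"
      define cD where "cD = c * (D k)\<^sup>2"
      define cZ where "cZ = c * Z"
      define cT where "cT = c * (\<theta>\<^sup>2 * \<Delta>)"
      define LD where "LD = L / 2 * (D k)\<^sup>2"
      define LT where "LT = L / 2 * (\<theta>\<^sup>2 * \<Delta>)"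
      define M where "M = \<mu> / 2 * \<theta> * (1 - \<theta>) * \<Delta>"
      define E where "E = \<eta> / 2 * (norm \<epsilon>)\<^sup>2"
      have yf: "r y \<noteq> \<infinity>" unfolding y_def by (rule dom)
      have zzc: "r zz \<noteq> \<infinity>" "rr zz \<le> (1 - \<theta>) * rr y + \<theta> * rr xstar"
        unfolding zz_def rr_def using pcc_convex[OF r_pcc yf xsf, of \<theta>] th_pos th1 by auto
      have pr: "p = prox r \<eta> (y - \<eta> *\<^sub>R G)" unfolding p_def y_def G_def by (rule iter)
      have R0: "\<eta> * rr p + (1/2) * (norm (p - (y - \<eta> *\<^sub>R G)))\<^sup>2 + (1/2) * Z
          \<le> \<eta> * rr zz + (1/2) * (norm (zz - (y - \<eta> *\<^sub>R G)))\<^sup>2"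
        using prox_char[OF r_pcc eta_pos, of "y - \<eta> *\<^sub>R G"] zzc(1) unfolding pr[symmetric] rr_def Z_def by blast
      have Dk: "D k = norm (p - y)" unfolding D_def p_def y_def ..
      have zy: "zz - y = \<theta> *\<^sub>R (xstar - y)" unfolding zz_def by (simp add: algebra_simps)
      have nzy: "(norm (zz - y))\<^sup>2 = \<theta>\<^sup>2 * \<Delta>" unfolding zy \<Delta>_def
        by (simp add: power_mult_distrib norm_minus_commute)
      have n1: "(norm (p - (y - \<eta> *\<^sub>R G)))\<^sup>2 = (D k)\<^sup>2 + 2 * (\<eta> * A1) + \<eta>\<^sup>2 * (norm G)\<^sup>2"
      proof -
        have e: "p - (y - \<eta> *\<^sub>R G) = (p - y) + \<eta> *\<^sub>R G" by simp
        show ?thesis unfolding e nsq_add Dk A1_def by (simp add: power_mult_distrib inner_commute algebra_simps)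
      qed
      have n2: "(norm (zz - (y - \<eta> *\<^sub>R G)))\<^sup>2 = \<theta>\<^sup>2 * \<Delta> + 2 * (\<eta> * A2) + \<eta>\<^sup>2 * (norm G)\<^sup>2"
      proof -
        have e: "zz - (y - \<eta> *\<^sub>R G) = (zz - y) + \<eta> *\<^sub>R G" by simp
        show ?thesis unfolding e nsq_add nzy A2_def by (simp add: power_mult_distrib inner_commute algebra_simps)
      qed
      have R0': "\<eta> * rr p + (1/2) * (D k)\<^sup>2 + \<eta> * A1 + (1/2) * Z \<le> \<eta> * rr zz + (1/2) * (\<theta>\<^sup>2 * \<Delta>) + \<eta> * A2"
        using R0 unfolding n1 n2 distrib_left by simp
      have ec: "\<eta> * c = 1/2" unfolding c_def using eta_pos by simp
      have "\<eta> * (rr p + cD + A1 + cZ) \<le> \<eta> * (rr zz + cT + A2)"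
      proof -
        have "\<eta> * (rr p + cD + A1 + cZ) = \<eta> * rr p + (\<eta> * c) * (D k)\<^sup>2 + \<eta> * A1 + (\<eta> * c) * Z"
          unfolding cD_def cZ_def by (simp add: algebra_simps)
        moreover have "\<eta> * (rr zz + cT + A2) = \<eta> * rr zz + (\<eta> * c) * (\<theta>\<^sup>2 * \<Delta>) + \<eta> * A2"
          unfolding cT_def by (simp add: algebra_simps)
        ultimately show ?thesis using R0' unfolding ec by simp
      qed
      hence R1: "rr p + cD + A1 + cZ \<le> rr zz + cT + A2" using eta_pos by simp
      have U: "f p \<le> f y + B1 + LD" using fup[where y=y and z=p] unfolding B1_def LD_def Dk .
      have Lo: "f zz \<ge> f y + B2 - LT" using flo[where y=y and z=zz] unfolding B2_def LT_def nzy .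
      have SC: "f zz \<le> (1 - \<theta>) * f y + \<theta> * f xstar - M"
      proof -
        have h: "f zz - \<mu> / 2 * (norm zz)\<^sup>2 \<le> (1 - \<theta>) * (f y - \<mu> / 2 * (norm y)\<^sup>2) + \<theta> * (f xstar - \<mu> / 2 * (norm xstar)\<^sup>2)"
          using convex_onD[OF strong, of \<theta> y xstar] th_pos th1 unfolding zz_def by simp
        have nz: "(norm zz)\<^sup>2 = (1 - \<theta>) * (norm y)\<^sup>2 + \<theta> * (norm xstar)\<^sup>2 - \<theta> * (1 - \<theta>) * \<Delta>"
          unfolding zz_def \<Delta>_def by (rule norm_convex_comb)
        have h': "f zz \<le> (1 - \<theta>) * (f y - \<mu> / 2 * (norm y)\<^sup>2) + \<theta> * (f xstar - \<mu> / 2 * (norm xstar)\<^sup>2)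
             + \<mu> / 2 * ((1 - \<theta>) * (norm y)\<^sup>2 + \<theta> * (norm xstar)\<^sup>2 - \<theta> * (1 - \<theta>) * \<Delta>)"
          using h unfolding nz by linarith
        have "(1 - \<theta>) * (f y - \<mu> / 2 * (norm y)\<^sup>2) + \<theta> * (f xstar - \<mu> / 2 * (norm xstar)\<^sup>2)
             + \<mu> / 2 * ((1 - \<theta>) * (norm y)\<^sup>2 + \<theta> * (norm xstar)\<^sup>2 - \<theta> * (1 - \<theta>) * \<Delta>)
             = (1 - \<theta>) * f y + \<theta> * f xstar - M" unfolding M_def by (simp add: field_simps)
        thus ?thesis using h' by linarith
      qed
      have Y: "(A2 - A1) - (B2 - B1) - cZ \<le> E"
      proof -
        have "\<epsilon> \<bullet> (zz - p) = (A2 - A1) - (B2 - B1)"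
          unfolding \<epsilon>_def A1_def A2_def B1_def B2_def by (simp add: inner_diff_left inner_diff_right algebra_simps)
        thus ?thesis using young_ineq[OF eta_pos, of \<epsilon> "zz - p"] unfolding cZ_def c_def Z_def E_def by simp
      qed
      have EB: "E \<le> \<alpha> * T k"
      proof -
        have "E \<le> \<eta> / 2 * (L\<^sup>2 * (real K * T k))" unfolding E_def \<epsilon>_def G_def y_def
          using epsb[of k] eta_pos by (intro mult_left_mono) auto
        thus ?thesis unfolding \<alpha>_def by (simp add: algebra_simps)
      qed
      have TH: "cT + LT = M"
      proof -
        have "cT + LT = (\<theta> * \<Delta> / 2) * (\<theta> * (1 / \<eta> + L))"
          unfolding cT_def LT_def c_def by (simp add: algebra_simps power2_eq_square)
        also have "\<dots> = M" unfolding th_id M_def by (simp add: algebra_simps)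
        finally show ?thesis .
      qed
      have GI: "(1 - \<theta>) * Fr k + \<alpha> * T k - \<gamma> * (D k)\<^sup>2
          = (1 - \<theta>) * f y + \<theta> * f xstar + ((1 - \<theta>) * rr y + \<theta> * rr xstar) - Fs + \<alpha> * T k - cD + LD"
        unfolding Fr_def Fs_def y_def cD_def LD_def \<gamma>_def c_def by (simp add: algebra_simps)
      have FS: "Fr (Suc k) = f p + rr p - Fs" unfolding Fr_def p_def ..
      show ?thesis unfolding GI FS using R1 U Lo SC Y EB TH zzc(2) by linarith
    qed
    have Snn: "S k \<ge> 0" for k unfolding S_def by (intro sum_nonneg) auto
    have SKT: "S k \<le> real K * T k" for k unfolding S_def T_def sum_distrib_left
      by (intro sum_mono) (auto intro: mult_right_mono)
    have Srec: "S (Suc k) = real K * (D k)\<^sup>2 + S k - T k" for k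
    proof -
      obtain K' where K': "K = Suc K'" using K_ge by (cases K) auto
      have sh0: "Dd (Suc k) 0 = D k" unfolding Dd_def by simp
      have shS: "Dd (Suc k) (Suc d) = Dd k d" for d unfolding Dd_def by simp
      have "S (Suc k) = (real K - real 0) * (Dd (Suc k) 0)\<^sup>2 + (\<Sum>d<K'. (real K - real (Suc d)) * (Dd (Suc k) (Suc d))\<^sup>2)"
        unfolding S_def K' by (rule sum.lessThan_Suc_shift)
      also have "\<dots> = real K * (D k)\<^sup>2 + (\<Sum>d<K'. (real K - real d - 1) * (Dd k d)\<^sup>2)"
        by (simp add: sh0 shS algebra_simps)
      also have "(\<Sum>d<K'. (real K - real d - 1) * (Dd k d)\<^sup>2) = (\<Sum>d<K. (real K - real d - 1) * (Dd k d)\<^sup>2)"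
        unfolding K' by (simp add: sum.lessThan_Suc)
      also have "\<dots> = S k - T k" unfolding S_def T_def by (simp add: algebra_simps sum_subtractf sum.distrib)
      finally show ?thesis by simp
    qed
    have Lyap: "W (Suc k) \<le> (1 - \<theta>) * W k" for k
    proof -
      have "W (Suc k) = Fr (Suc k) + \<alpha> * \<beta> * real K * (D k)\<^sup>2 + \<alpha> * \<beta> * S k - \<alpha> * \<beta> * T k"
        unfolding W_def Srec by (simp add: algebra_simps)
      also have "\<dots> \<le> (1 - \<theta>) * Fr k + \<alpha> * T k - (\<gamma> - \<alpha> * \<beta> * real K) * (D k)\<^sup>2 + \<alpha> * \<beta> * S k - \<alpha> * \<beta> * T k"
        using stepP[of k] by (simp add: algebra_simps)
      also have "\<dots> \<le> (1 - \<theta>) * Fr k + \<alpha> * T k + \<alpha> * \<beta> * S k - \<alpha> * \<beta> * T k"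
        using abK by simp
      also have "\<dots> \<le> (1 - \<theta>) * W k"
      proof -
        have "\<theta> * (\<alpha> * \<beta>) * S k \<le> \<theta> * (\<alpha> * \<beta>) * (real K * T k)"
          using SKT[of k] th_pos alpha_nn beta_ge by (intro mult_left_mono) auto
        moreover have "\<alpha> * \<beta> * T k - \<alpha> * T k = \<theta> * (\<alpha> * \<beta>) * (real K * T k)"
        proof -
          have "\<beta> - 1 = \<theta> * \<beta> * real K" using beta_id by (simp add: algebra_simps)
          hence "\<alpha> * T k * (\<beta> - 1) = \<alpha> * T k * (\<theta> * \<beta> * real K)" by simp
          thus ?thesis by (simp add: algebra_simps)
        qed
        ultimately show ?thesis unfolding W_def by (simp add: algebra_simps)
      qed
      finally show ?thesis .
    qed
    have W0: "W 0 = Fr 0" unfolding W_def S_def Dd_def by simp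
    have Wdec: "W k \<le> (1 - \<theta>) ^ k * Fr 0" for k
    proof (induction k)
      case 0 thus ?case using W0 by simp
    next
      case (Suc k)
      have "W (Suc k) \<le> (1 - \<theta>) * W k" by (rule Lyap)
      also have "\<dots> \<le> (1 - \<theta>) * ((1 - \<theta>) ^ k * Fr 0)" using Suc th1 by (intro mult_left_mono) auto
      finally show ?case by simp
    qed
    have FrW: "Fr k \<le> W k" for k unfolding W_def using Snn[of k] alpha_nn beta_ge by simp
    show ?thesis
    proof (intro allI impI)
      fix k assume k: "a * K + 1 \<le> k"
      define \<rho> where "\<rho> = 1 - \<eta> * \<mu> / 18"
      have "Fr k \<le> (1 - \<theta>) ^ k * Fr 0" using FrW Wdec order_trans by blast
      also have "\<dots> \<le> \<rho> ^ k * Fr 0" using th_rho th1 Frnn[of 0] unfolding \<rho>_def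
        by (intro mult_right_mono power_mono) auto
      also have "\<rho> ^ k = \<rho> powr (real k)" using rho_pos unfolding \<rho>_def by (simp add: powr_realpow)
      also have "\<rho> powr (real k) \<le> \<rho> powr ((real k + 1) / (real a * real K + 1) - 1)"
      proof (rule powr_mono')
        have "(real k + 1) / (real a * real K + 1) \<le> (real k + 1) / 1"
        proof (rule divide_left_mono)
          show "1 \<le> real a * real K + 1" by simp
          show "0 < (real a * real K + 1) * 1" by (simp add: add_nonneg_pos)
        qed simp
        thus "(real k + 1) / (real a * real K + 1) - 1 \<le> real k" by simp
      qed (use rho_pos rho_le in \<open>auto simp: \<rho>_def\<close>)
      finally have main: "Fr k \<le> \<rho> powr ((real k + 1) / (real a * real K + 1) - 1) * Fr 0"
        using Frnn[of 0] by (simp add: mult_right_mono)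
      have "ereal (Fr 0) \<le> Max ((\<lambda>j. F (x j) - F xstar) ` {0..a * K})"
        unfolding FrE[symmetric] by (rule Max_ge) auto
      hence "ereal (\<rho> powr ((real k + 1) / (real a * real K + 1) - 1)) * ereal (Fr 0)
          \<le> ereal (\<rho> powr ((real k + 1) / (real a * real K + 1) - 1)) * Max ((\<lambda>j. F (x j) - F xstar) ` {0..a * K})"
        by (rule ereal_mult_left_mono) simp
      moreover have "F (x k) - F xstar \<le> ereal (\<rho> powr ((real k + 1) / (real a * real K + 1) - 1)) * ereal (Fr 0)"
        unfolding FrE using main by simp
      ultimately show "F (x k) - F xstar \<le> ereal ((1 - \<eta> * \<mu> / 18) powr ((real k + 1) / (real a * real K + 1) - 1)) *
             Max ((\<lambda>j. F (x j) - F xstar) ` {0..a * K})" unfolding \<rho>_def by (rule order_trans[rotated])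
    qed
  qed
qed
end
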